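(* Let $p$ be a prime and $k$ a positive integer. Let $A,B,K\in\mathbb{Z}[x,y]$ be homogeneous polynomials with $K^r=\gcd(A^3,B^2)$ for some positive integer $r$, let $R=\mathrm{Res}(A^3/K^r,B^2/K^r)$, and let $\nu(k)=\max\{\lceil 12k/r\rceil,v_p(R)\}$. Let $\mathcal{U}=\{(a,b)\in\mathbb{Z}^2:p^{4k}\mid A(a,b),\ p^{6k}\mid B(a,b)\}$. If $(a_1,b_1)\in\mathcal{U}$ and $\gcd(a_1,b_1,p)=1$, then $(a_1+p^{\nu(k)}\mathbb{Z})\times(b_1+p^{\nu(k)}\mathbb{Z})\subseteq\mathcal{U}$.
   Context: $\gcd(F,G)$ denotes the polynomial with integer coefficients of highest possible degree and smallest possible positive leading coefficient (lexicographic ordering) dividing both $F$ and $G$ in $\mathbb{Q}[x,y]$. $\mathrm{Res}$ is the resultant of homogeneous binary forms. *)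

theory Defs
  imports Complex_Main "HOL-Computational_Algebra.Polynomial" "Subresultants.Resultant_Prelim"
    "HOL-Library.Extended_Nat"
begin

text \<open>Bivariate polynomials in x and y are represented as elements of type
  'a poly poly: the OUTER variable is x, the INNER variable is y.
  So coeff (coeff P i) j is the coefficient of x^i y^j.\<close>

definition eval2 :: "'a::comm_semiring_1 poly poly \<Rightarrow> 'a \<Rightarrow> 'a \<Rightarrow> 'a" where
  "eval2 P a b = poly (map_poly (\<lambda>q. poly q b) P) a"

definition homogeneous2 :: "'a::zero poly poly \<Rightarrow> bool" where
  "homogeneous2 P \<longleftrightarrow> (\<exists>d. \<forall>i j. coeff (coeff P i) j \<noteq> 0 \<longrightarrow> i + j = d)"

definition tdeg2 :: "'a::zero poly poly \<Rightarrow> nat" where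
  "tdeg2 P = Max ({i + j | i j. coeff (coeff P i) j \<noteq> 0} \<union> {0})"

text \<open>Leading coefficient w.r.t. the lexicographic order with x > y.\<close>
definition lex_lc2 :: "'a::zero poly poly \<Rightarrow> 'a" where
  "lex_lc2 P = lead_coeff (lead_coeff P)"

definition to_rat2 :: "int poly poly \<Rightarrow> rat poly poly" where
  "to_rat2 P = map_poly (map_poly rat_of_int) P"

definition dvd_Q2 :: "int poly poly \<Rightarrow> int poly poly \<Rightarrow> bool" where
  "dvd_Q2 E F \<longleftrightarrow> to_rat2 E dvd to_rat2 F"

text \<open>The paper's gcd: D is an integer polynomial dividing F and G in Q[x,y],
  of highest possible degree among such, and with the smallest possible
  positive (lexicographic) leading coefficient among those.\<close>
definition is_gcd2 :: "int poly poly \<Rightarrow> int poly poly \<Rightarrow> int poly poly \<Rightarrow> bool" where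
  "is_gcd2 F G D \<longleftrightarrow>
     dvd_Q2 D F \<and> dvd_Q2 D G \<and>
     (\<forall>E. dvd_Q2 E F \<and> dvd_Q2 E G \<longrightarrow> tdeg2 E \<le> tdeg2 D) \<and>
     lex_lc2 D > 0 \<and>
     (\<forall>E. dvd_Q2 E F \<and> dvd_Q2 E G \<and> tdeg2 E = tdeg2 D \<and> lex_lc2 E > 0
        \<longrightarrow> lex_lc2 D \<le> lex_lc2 E)"

definition dehom2 :: "'a::comm_semiring_1 poly poly \<Rightarrow> 'a poly" where
  "dehom2 P = map_poly (\<lambda>q. poly q 1) P"

text \<open>Resultant of homogeneous binary forms (of their total degrees),
  as the determinant of the Sylvester matrix of the coefficient vectors.\<close>
definition res_form :: "int poly poly \<Rightarrow> int poly poly \<Rightarrow> int" where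
  "res_form F G = resultant_sub (tdeg2 F) (tdeg2 G) (dehom2 F) (dehom2 G)"

definition vp :: "int \<Rightarrow> int \<Rightarrow> enat" where
  "vp p n = (if n = 0 then \<infinity> else enat (multiplicity p n))"

text \<open>x \<in> x1 + p^nu Z, with p^infinity Z = {0}.\<close>
definition in_coset :: "int \<Rightarrow> enat \<Rightarrow> int \<Rightarrow> int \<Rightarrow> bool" where
  "in_coset p nu x1 x \<longleftrightarrow> (\<forall>n::nat. enat n \<le> nu \<longrightarrow> p ^ n dvd (x - x1))"

end

theory Submission
  imports Defs "HOL-Computational_Algebra.Polynomial_Factorial"
begin


lemma eval2_mult: "eval2 (P * Q) a b = eval2 P a b * (eval2 Q (a::'a::comm_ring_1) b)"
proof -
  interpret h: map_poly_comm_ring_hom "\<lambda>q. poly q b" ..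
  show ?thesis unfolding eval2_def by (simp add: h.hom_mult)
qed

lemma eval2_power: "eval2 (P ^ n) a b = eval2 P a (b::'a::comm_ring_1) ^ n"
  by (induction n) (simp_all add: eval2_mult, simp add: eval2_def)

definition sc :: "int poly poly \<Rightarrow> int poly poly" where
  "sc P = pcompose (map_poly (\<lambda>q. pcompose q [:0,2:]) P) [:0,[:2:]:]"

lemma sc_mult: "sc (P * Q) = sc P * sc Q"
proof -
  interpret h: map_poly_comm_ring_hom "\<lambda>q. pcompose q [:0,2::int:]" ..
  show ?thesis unfolding sc_def by (simp add: h.hom_mult pcompose_mult)
qed

lemma sc_power: "sc (P ^ n) = sc P ^ n"
  apply (induction n) apply (simp add: sc_def) by (simp add: sc_mult)

lemma coeff_sc: "coeff (coeff (sc P) i) j = 2^(i+j) * coeff (coeff P i) j"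
proof -
  have "coeff (sc P) i = [:2:]^i * pcompose (coeff P i) [:0,2:]"
    unfolding sc_def by (subst coeff_pcompose_linear) (simp add: coeff_map_poly)
  also have "[:2:]^i = [:(2::int)^i:]" by (induction i) auto 
  finally show ?thesis by (simp add: coeff_pcompose_linear power_add)
qed



definition hdeg :: "nat \<Rightarrow> 'a::zero poly poly \<Rightarrow> bool" where
  "hdeg d P \<longleftrightarrow> (\<forall>i j. coeff (coeff P i) j \<noteq> 0 \<longrightarrow> i + j = d)"

definition CC :: "int \<Rightarrow> int poly poly" where "CC c = [:[:c:]:]"

lemma coeff_CC_mult: "coeff (coeff (CC c * P) i) j = c * coeff (coeff P i) j"
  unfolding CC_def by simp

lemma CC_mult: "CC a * CC b = CC (a * b)" unfolding CC_def by simp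

lemma CC_power: "CC a ^ n = CC (a ^ n)"
  by (induction n) (auto simp: CC_mult, simp add: CC_def one_pCons)

lemma poly_poly_eqI: "(\<And>i j. coeff (coeff P i) j = coeff (coeff Q i) j) \<Longrightarrow> P = Q"
  by (simp add: poly_eq_iff)

lemma hdeg_sc: "hdeg d P \<longleftrightarrow> sc P = CC (2^d) * P"
proof
  assume "hdeg d P"
  then show "sc P = CC (2^d) * P"
    by (intro poly_poly_eqI) (metis coeff_CC_mult coeff_sc hdeg_def mult_zero_right)
next
  assume h: "sc P = CC (2^d) * P"
  show "hdeg d P" unfolding hdeg_def
  proof (intro allI impI)
    fix i j assume "coeff (coeff P i) j \<noteq> 0"
    moreover have "2^(i+j) * coeff (coeff P i) j = 2^d * coeff (coeff P i) j"
      using arg_cong[OF h, of "\<lambda>X. coeff (coeff X i) j"] by (simp add: coeff_sc coeff_CC_mult)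
    ultimately have "(2::int)^(i+j) = 2^d" by simp
    then show "i + j = d" by (metis power_inject_exp one_less_numeral_iff semiring_norm(76))
  qed
qed


lemma hdeg_power: fixes P :: "int poly poly" assumes "hdeg d P" shows "hdeg (n*d) (P^n)"
proof -
  have "sc (P^n) = (CC (2^d) * P)^n" using assms by (simp add: hdeg_sc sc_power)
  also have "\<dots> = CC (2^(n*d)) * P^n" by (simp add: power_mult_distrib CC_power power_mult mult.commute)
  finally show ?thesis by (simp add: hdeg_sc)
qed

lemma hdeg_quot:
  fixes K Q A :: "int poly poly"
  assumes "K * Q = A" "K \<noteq> 0" "hdeg e K" "hdeg D A"
  shows "hdeg (D - e) Q"
proof -
  have "CC (2^e) * K * sc Q = CC (2^D) * (K * Q)"
    using assms hdeg_sc sc_mult by (metis)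
  hence "K * (CC (2^e) * sc Q) = K * (CC (2^D) * Q)" by (simp add: ac_simps)
  hence h: "CC (2^e) * sc Q = CC (2^D) * Q" using assms(2) by simp
  show ?thesis unfolding hdeg_def
  proof (intro allI impI)
    fix i j assume nz: "coeff (coeff Q i) j \<noteq> 0"
    have "2^e * (2^(i+j) * coeff (coeff Q i) j) = 2^D * coeff (coeff Q i) j"
      using arg_cong[OF h, of "\<lambda>X. coeff (coeff X i) j"] by (simp add: coeff_sc coeff_CC_mult)
    with nz have "(2::int)^(e+(i+j)) = 2^D" by (simp add: power_add)
    then have "e + (i + j) = D" by (metis power_inject_exp one_less_numeral_iff semiring_norm(76))
    then show "i + j = D - e" by simp
  qed
qed


lemma homogeneous2_hdeg: "homogeneous2 P \<Longrightarrow> \<exists>d. hdeg d P"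
  unfolding homogeneous2_def hdeg_def by auto

lemma hdeg_tdeg2:
  assumes "hdeg d P" "P \<noteq> (0::int poly poly)" shows "tdeg2 P = d"
proof -
  obtain i where "coeff P i \<noteq> 0" using assms(2) by (metis leading_coeff_0_iff)
  then obtain j where "coeff (coeff P i) j \<noteq> 0" by (metis leading_coeff_0_iff)
  then have "{i + j | i j. coeff (coeff P i) j \<noteq> 0} = {d}" using assms(1) unfolding hdeg_def
    by auto
  then show ?thesis unfolding tdeg2_def by simp
qed

lemma hdeg_tdeg2': "hdeg d P \<Longrightarrow> hdeg (tdeg2 P) (P::int poly poly)"
  by (cases "P = 0") (auto simp: hdeg_tdeg2 hdeg_def)

lemma coeff_hdeg:
  assumes "hdeg d F"
  shows "coeff F i = (if i \<le> d then monom (coeff (coeff F i) (d-i)) (d-i) else 0)"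
proof (intro poly_eqI)
  fix j
  have "coeff (coeff F i) j \<noteq> 0 \<Longrightarrow> i + j = d" using assms unfolding hdeg_def by blast
  then show "coeff (coeff F i) j = coeff (if i \<le> d then monom (coeff (coeff F i) (d-i)) (d-i) else 0) j"
    by (cases "i \<le> d"; cases "j = d - i") (auto simp: coeff_monom, metis add_diff_cancel_left')
qed


lemma dehom_hdeg:
  assumes "hdeg d (F::'a::comm_semiring_1 poly poly)"
  shows "coeff (dehom2 F) t = (if t \<le> d then coeff (coeff F t) (d-t) else 0)"
proof -
  have "coeff (dehom2 F) t = poly (coeff F t) 1" unfolding dehom2_def by (simp add: coeff_map_poly)
  also have "\<dots> = (if t \<le> d then coeff (coeff F t) (d-t) else 0)"
    by (subst coeff_hdeg[OF assms]) (simp add: poly_monom)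
  finally show ?thesis .
qed


lemma eval2_hdeg:
  assumes "hdeg d (F::'a::comm_semiring_1 poly poly)"
  shows "eval2 F a b = (\<Sum>t\<le>d. coeff (dehom2 F) t * a^t * b^(d-t))"
proof -
  let ?G = "map_poly (\<lambda>q. poly q b) F"
  have cG: "coeff ?G t = (if t \<le> d then coeff (coeff F t) (d-t) * b^(d-t) else 0)" for t
  proof -
    have "coeff ?G t = poly (coeff F t) b" by (simp add: coeff_map_poly)
    also have "\<dots> = (if t \<le> d then coeff (coeff F t) (d-t) * b^(d-t) else 0)"
      by (subst coeff_hdeg[OF assms]) (simp add: poly_monom)
    finally show ?thesis .
  qed
  have "degree ?G \<le> d" by (rule degree_le) (intro allI impI, subst cG, simp)
  then have "eval2 F a b = (\<Sum>t\<le>d. coeff ?G t * a^t)"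
    unfolding eval2_def poly_altdef by (intro sum.mono_neutral_left) (auto simp: coeff_eq_0)
  also have "\<dots> = (\<Sum>t\<le>d. coeff (dehom2 F) t * a^t * b^(d-t))"
    by (intro sum.cong refl, subst cG, simp add: dehom_hdeg[OF assms] ac_simps)
  finally show ?thesis .
qed



lemma det_dvd:
  fixes S :: "int mat" and v :: "int vec"
  assumes S: "S \<in> carrier_mat N N" and v: "v \<in> carrier_vec N"
    and d: "\<forall>i<N. M dvd (S *\<^sub>v v) $ i" and i: "i < N"
  shows "M dvd det S * v $ i"
proof -
  have A: "adj_mat S \<in> carrier_mat N N" using adj_mat(1)[OF S] .
  have "(adj_mat S * S) *\<^sub>v v = adj_mat S *\<^sub>v (S *\<^sub>v v)"
    using A S v by simp
  moreover have "((adj_mat S * S) *\<^sub>v v) $ i = det S * v $ i"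
  proof -
    have "((adj_mat S * S) *\<^sub>v v) $ i = ((det S \<cdot>\<^sub>m 1\<^sub>m N) *\<^sub>v v) $ i"
      using adj_mat(3)[OF S] by simp
    also have "\<dots> = (\<Sum>j\<in>{0..<N}. (if i = j then det S else 0) * v $ j)"
      using i v by (simp add: scalar_prod_def, intro sum.cong, auto)
    also have "\<dots> = (\<Sum>j\<in>{0..<N}. (if i = j then det S * v $ j else 0))"
      by (rule sum.cong) auto
    also have "\<dots> = det S * v $ i" using i by simp
    finally show ?thesis .
  qed
  moreover have "M dvd (adj_mat S *\<^sub>v (S *\<^sub>v v)) $ i"
  proof -
    have "(adj_mat S *\<^sub>v (S *\<^sub>v v)) $ i = (\<Sum>j\<in>{0..<N}. row (adj_mat S) i $ j * (S *\<^sub>v v) $ j)"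
      using A S i by (simp add: scalar_prod_def)
    also have "M dvd \<dots>" using d by (intro dvd_sum dvd_mult) auto
    finally show ?thesis .
  qed
  ultimately show ?thesis by simp
qed

lemma sum_band:
  fixes h w :: "nat \<Rightarrow> 'a::comm_semiring_1"
  assumes "L \<le> i" "i < N"
  shows "(\<Sum>j<N. (if i - L \<le> j \<and> j \<le> i then h (i - j) else 0) * w j) = (\<Sum>t\<le>L. h t * w (i - t))"
proof -
  have "(\<Sum>t\<le>L. h t * w (i - t)) = (\<Sum>j\<in>{i-L..i}. h (i - j) * w j)"
    by (rule sum.reindex_bij_witness[of _ "\<lambda>j. i - j" "\<lambda>t. i - t"]) (use assms in auto)
  also have "\<dots> = (\<Sum>j<N. (if i - L \<le> j \<and> j \<le> i then h (i - j) else 0) * w j)"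
    by (rule sum.mono_neutral_cong_left) (use assms in auto)
  finally show ?thesis by simp
qed


lemma res_dvd:
  fixes F G :: "int poly poly" and a b M :: int
  assumes hF: "hdeg m F" and hG: "hdeg n G" and mn: "m + n > 0"
    and dF: "M dvd eval2 F a b" and dG: "M dvd eval2 G a b"
  shows "M dvd resultant_sub m n (dehom2 F) (dehom2 G) * a^(m+n-1)"
    and "M dvd resultant_sub m n (dehom2 F) (dehom2 G) * b^(m+n-1)"
proof -
  define N where "N = m + n"
  define f where "f = dehom2 F"
  define g where "g = dehom2 G"
  define S where "S = sylvester_mat_sub m n f g"
  define v where "v = vec N (\<lambda>j. a^(N-1-j) * b^j)"
  have S: "S \<in> carrier_mat N N" unfolding S_def N_def by (rule sylvester_mat_sub_carrier)
  have v: "v \<in> carrier_vec N" unfolding v_def by simp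
  have Sv: "(S *\<^sub>v v) $ i = (\<Sum>j<N. S $$ (i,j) * (a^(N-1-j) * b^j))" if i: "i < N" for i
    using S v i unfolding v_def by (simp add: scalar_prod_def lessThan_atLeast0)
  have d: "\<forall>i<N. M dvd (S *\<^sub>v v) $ i"
  proof (intro allI impI)
    fix i assume i: "i < N"
    show "M dvd (S *\<^sub>v v) $ i"
    proof (cases "i < n")
      case True
      have "(S *\<^sub>v v) $ i = (\<Sum>j<N. (if (m+i) - m \<le> j \<and> j \<le> m+i then coeff f ((m+i) - j) else 0) * (a^(N-1-j) * b^j))"
        unfolding Sv[OF i] using True i
        proof (intro sum.cong refl)
          fix j assume "j \<in> {..<N}"
          hence j: "j < m+n" by (simp add: N_def)
          have "S $$ (i,j) = (if i \<le> j \<and> j - i \<le> m then coeff f (m+i-j) else 0)"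
            unfolding S_def using sylvester_mat_sub_index[of i m n j f g] True i j N_def by simp
          also have "\<dots> = (if (m+i)-m \<le> j \<and> j \<le> m+i then coeff f ((m+i)-j) else 0)" by auto
          finally show "S $$ (i,j) * (a^(N-1-j) * b^j) = (if (m+i)-m \<le> j \<and> j \<le> m+i then coeff f ((m+i)-j) else 0) * (a^(N-1-j) * b^j)" by simp
        qed
      also have "\<dots> = (\<Sum>t\<le>m. coeff f t * (a^(N-1-(m+i-t)) * b^(m+i-t)))"
        using True N_def by (intro sum_band) auto
      also have "\<dots> = (\<Sum>t\<le>m. (a^(n-1-i) * b^i) * (coeff f t * a^t * b^(m-t)))"
      proof (intro sum.cong refl)
        fix t assume "t \<in> {..m}"
        then have e: "N-1-(m+i-t) = (n-1-i) + t" "m+i-t = i + (m-t)" using True N_def by auto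
        have p1: "a^(N-1-(m+i-t)) = a^(n-1-i) * a^t" by (subst e(1), rule power_add)
        have p2: "b^(m+i-t) = b^i * b^(m-t)" by (subst e(2), rule power_add)
        then show "coeff f t * (a^(N-1-(m+i-t)) * b^(m+i-t)) = (a^(n-1-i) * b^i) * (coeff f t * a^t * b^(m-t))"
          unfolding p1 p2 by (simp add: ac_simps)
      qed
      also have "\<dots> = (a^(n-1-i) * b^i) * eval2 F a b"
        unfolding eval2_hdeg[OF hF] f_def by (simp add: sum_distrib_left)
      finally show ?thesis using dF by simp
    next
      case False
      have "(S *\<^sub>v v) $ i = (\<Sum>j<N. (if i - n \<le> j \<and> j \<le> i then coeff g (i - j) else 0) * (a^(N-1-j) * b^j))"
        unfolding Sv[OF i] using False i
        proof (intro sum.cong refl)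
          fix j assume "j \<in> {..<N}"
          hence j: "j < m+n" by (simp add: N_def)
          have "S $$ (i,j) = (if i - n \<le> j \<and> j \<le> i then coeff g (i-j) else 0)"
            unfolding S_def using sylvester_mat_sub_index[of i m n j f g] False i j N_def by simp
          then show "S $$ (i,j) * (a^(N-1-j) * b^j) = (if i - n \<le> j \<and> j \<le> i then coeff g (i-j) else 0) * (a^(N-1-j) * b^j)" by simp
        qed
      also have "\<dots> = (\<Sum>t\<le>n. coeff g t * (a^(N-1-(i-t)) * b^(i-t)))"
        using False i by (intro sum_band) auto
      also have "\<dots> = (\<Sum>t\<le>n. (a^(N-1-i) * b^(i-n)) * (coeff g t * a^t * b^(n-t)))"
      proof (intro sum.cong refl)
        fix t assume "t \<in> {..n}"
        then have e: "N-1-(i-t) = (N-1-i) + t" "i-t = (i-n) + (n-t)" using False i by auto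
        have p1: "a^(N-1-(i-t)) = a^(N-1-i) * a^t" by (subst e(1), rule power_add)
        have p2: "b^(i-t) = b^(i-n) * b^(n-t)" by (subst e(2), rule power_add)
        then show "coeff g t * (a^(N-1-(i-t)) * b^(i-t)) = (a^(N-1-i) * b^(i-n)) * (coeff g t * a^t * b^(n-t))"
          unfolding p1 p2 by (simp add: ac_simps)
      qed
      also have "\<dots> = (a^(N-1-i) * b^(i-n)) * eval2 G a b"
        unfolding eval2_hdeg[OF hG] g_def by (simp add: sum_distrib_left)
      finally show ?thesis using dG by simp
    qed
  qed
  have R: "resultant_sub m n (dehom2 F) (dehom2 G) = det S" unfolding resultant_sub_def S_def f_def g_def ..
  have "M dvd det S * v $ 0" using det_dvd[OF S v d, of 0] mn N_def by simp
  then show "M dvd resultant_sub m n (dehom2 F) (dehom2 G) * a^(m+n-1)"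
    using mn unfolding R N_def v_def by simp
  have "M dvd det S * v $ (N-1)" using det_dvd[OF S v d, of "N-1"] mn N_def by simp
  then show "M dvd resultant_sub m n (dehom2 F) (dehom2 G) * b^(m+n-1)"
    using mn unfolding R N_def v_def by simp
qed



definition ic :: "int poly poly \<Rightarrow> int" where "ic P = content (content P)"

lemma ic_mult: "ic (P * Q) = ic P * ic Q"
  unfolding ic_def by (simp add: content_mult normalize_const_poly)

lemma ic_CC: "ic ([:[:c:]:] * P) = \<bar>c\<bar> * ic P"
  unfolding ic_def by (simp add: content_mult normalize_const_poly)

lemma ic_dvd_coeff: "ic P dvd coeff (coeff P i) j"
  unfolding ic_def by (meson content_dvd_coeff content_dvd_contentI dvd_trans)

lemma dvd_ic_factor: assumes "c dvd ic P" shows "\<exists>Q. P = [:[:c:]:] * Q"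
proof -
  have "[:c:] dvd content P" using assms unfolding ic_def by (simp add: const_poly_dvd_iff_dvd_content)
  then have "[:[:c:]:] dvd [:content P:]" by simp
  also have "\<dots> dvd P" by (rule content_dvd)
  finally show ?thesis by (auto elim!: dvdE)
qed

lemma ic_pos: "P \<noteq> 0 \<Longrightarrow> ic P > 0"
  unfolding ic_def by (metis content_eq_zero_iff normalize_content abs_ge_zero le_less normalize_int_def) 


lemma to_rat2_mult: "to_rat2 (P * Q) = to_rat2 P * to_rat2 Q"
proof -
  interpret h: map_poly_comm_ring_hom "map_poly (of_int :: int \<Rightarrow> rat)" ..
  show ?thesis unfolding to_rat2_def by (simp add: h.hom_mult)
qed

lemma to_rat2_inj: "to_rat2 P = to_rat2 Q \<Longrightarrow> P = Q"
proof -
  interpret h: map_poly_inj_comm_ring_hom "map_poly (of_int :: int \<Rightarrow> rat)" ..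
  show "to_rat2 P = to_rat2 Q \<Longrightarrow> P = Q" unfolding to_rat2_def by simp
qed

lemma to_rat2_CC: "to_rat2 ([:[:c:]:] * P) = smult [:of_int c:] (to_rat2 P)"
proof -
  interpret h2: map_poly_comm_ring_hom "map_poly (of_int :: int \<Rightarrow> rat)" ..
  show ?thesis unfolding to_rat2_def by (simp add: hom_distribs)
qed

lemma clear1: "\<exists>d>0. \<exists>q. map_poly of_int q = smult (of_int d) (p :: rat poly)"
proof (induction p)
  case 0
  then show ?case by (intro exI[of _ 1]) (auto intro: exI[of _ 0])
next
  case (pCons a p)
  then obtain d q where d: "d > 0" and q: "map_poly of_int q = smult (of_int d) p" by blast
  obtain n m where nm: "quotient_of a = (n, m)" by (cases "quotient_of a")
  then have m: "m > 0" and a: "a = of_int n / of_int m" by (auto simp: quotient_of_denom_pos quotient_of_div)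
  have "map_poly of_int (pCons (n * d) (smult m q)) = smult (of_int (d * m)) (pCons a p)"
  proof -
    interpret h: map_poly_comm_ring_hom "of_int :: int \<Rightarrow> rat" ..
    show ?thesis using m by (simp add: q a hom_distribs algebra_simps)
  qed  
  then show ?case using d m by (intro exI[of _ "d * m"]) auto
qed

lemma clear2: "\<exists>d>0. \<exists>Q. to_rat2 Q = smult [:of_int d:] (P :: rat poly poly)"
proof (induction P)
  case 0
  then show ?case by (intro exI[of _ 1]) (auto simp: to_rat2_def intro: exI[of _ 0])
next
  case (pCons A P)
  then obtain d Q where d: "d > 0" and Q: "to_rat2 Q = smult [:of_int d:] P" by blast
  obtain e q where e: "e > 0" and q: "map_poly of_int q = smult (of_int e) A" using clear1 by blast
  have "to_rat2 (pCons (smult d q) (smult [:e:] Q)) = smult [:of_int (d * e):] (pCons A P)"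
  proof -
    interpret h: map_poly_comm_ring_hom "of_int :: int \<Rightarrow> rat" ..
    interpret h2: map_poly_comm_ring_hom "map_poly (of_int :: int \<Rightarrow> rat)" ..
    show ?thesis using Q q unfolding to_rat2_def by (simp add: hom_distribs algebra_simps)
  qed
  then show ?case using d e by (intro exI[of _ "d * e"]) auto
qed


lemma coeff_CC2: "coeff (coeff ([:[:c:]:] * H) i) j = c * coeff (coeff H i) j"
  by simp

lemma gcd_prim:
  assumes g: "is_gcd2 F G D" shows "ic D = 1"
proof -
  have L: "lex_lc2 D > 0" using g unfolding is_gcd2_def by blast
  then have D0: "D \<noteq> 0" unfolding lex_lc2_def by auto
  define c where "c = ic D"
  have c: "c > 0" using ic_pos[OF D0] c_def by simp
  obtain H where H: "D = [:[:c:]:] * H" using dvd_ic_factor[of c D] c_def by auto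
  have tD: "to_rat2 D = smult [:of_int c:] (to_rat2 H)" using H to_rat2_CC by simp
  have dvdH: "dvd_Q2 H X" if "dvd_Q2 D X" for X
    using that unfolding dvd_Q2_def tD by (meson dvd_smult_cancel dvd_trans dvd_refl dvd_smult)
  have "{i + j |i j. coeff (coeff D i) j \<noteq> 0} = {i + j |i j. coeff (coeff H i) j \<noteq> 0}"
    unfolding H coeff_CC2 using c by simp
  then have tH: "tdeg2 H = tdeg2 D" unfolding tdeg2_def by simp
  have lH: "lex_lc2 D = c * lex_lc2 H"
    unfolding H lex_lc2_def using c by (simp add: lead_coeff_mult)
  then have LH: "lex_lc2 H > 0" using L c by (simp add: zero_less_mult_iff)
  have "lex_lc2 D \<le> lex_lc2 H"
    using g dvdH tH LH unfolding is_gcd2_def by blast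
  then have "c \<le> 1" using lH LH by (metis mult_le_cancel_right2 not_le)
  then show ?thesis using c c_def by simp
qed

lemma exact_div:
  assumes "dvd_Q2 D F" "ic D = 1" "D \<noteq> 0" shows "D * (F div D) = F"
proof -
  obtain Qr where Qr: "to_rat2 F = to_rat2 D * Qr" using assms(1) unfolding dvd_Q2_def by (auto elim!: dvdE)
  obtain d Q where d: "d > 0" and Q: "to_rat2 Q = smult [:of_int d:] Qr" using clear2 by blast
  have "to_rat2 ([:[:d:]:] * F) = smult [:of_int d:] (to_rat2 F)" by (rule to_rat2_CC)
  also have "\<dots> = to_rat2 (D * Q)" by (simp add: Qr Q to_rat2_mult)
  finally have "to_rat2 ([:[:d:]:] * F) = to_rat2 (D * Q)" .
  then have e: "[:[:d:]:] * F = D * Q" by (rule to_rat2_inj)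
  then have "ic ([:[:d:]:] * F) = ic (D * Q)" by simp
  then have "\<bar>d\<bar> * ic F = ic Q" by (metis ic_CC ic_mult assms(2) mult_1)
  then have "d dvd ic Q" using d by (metis abs_of_pos dvd_triv_left)
  then obtain Q2 where Q2: "Q = [:[:d:]:] * Q2" using dvd_ic_factor by blast
  have "[:[:d:]:] * F = [:[:d:]:] * (D * Q2)" using e Q2 by (simp add: ac_simps)
  moreover have "[:[:d:]:] \<noteq> 0" using d by simp
  ultimately have F: "F = D * Q2" using mult_left_cancel by blast
  show ?thesis using assms(3) unfolding F by simp
qed



lemma poly_diff_dvd: "M dvd (x - y) \<Longrightarrow> M dvd (poly f x - poly f (y::int))"
proof (induction f)
  case 0 then show ?case by simp
next
  case (pCons c f)
  have "poly (pCons c f) x - poly (pCons c f) y = x * (poly f x - poly f y) + (x - y) * poly f y"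
    by (simp add: algebra_simps)
  then show ?case using pCons by simp
qed

lemma poly_coeff_dvd:
  assumes "\<And>i. M dvd (coeff f i - coeff g i)" shows "M dvd (poly f x - poly g (x::int))"
proof -
  have "\<And>i. M dvd coeff (f - g) i" using assms by simp
  then have "\<exists>h. f - g = smult M h"
  proof -
    assume H: "\<And>i. M dvd coeff (f - g) i"
    have "f - g = smult M (map_poly (\<lambda>c. c div M) (f - g))"
    proof (rule poly_eqI)
      fix i
      have "M dvd coeff (f - g) i" by (rule H)
      then show "coeff (f - g) i = coeff (smult M (map_poly (\<lambda>c. c div M) (f - g))) i"
        by (simp only: coeff_smult coeff_map_poly div_0) (metis dvd_mult_div_cancel)
    qed
    then show ?thesis by blast
  qed
  then obtain h where "f - g = smult M h" by blast
  then have "poly f x - poly g x = M * poly h x" by (metis poly_diff poly_smult)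
  then show ?thesis by simp
qed

lemma eval2_cong:
  fixes P :: "int poly poly"
  assumes "M dvd (a - a1)" "M dvd (b - b1)"
  shows "M dvd (eval2 P a b - eval2 P a1 b1)"
proof -
  have 1: "M dvd (poly (map_poly (\<lambda>q. poly q b) P) a - poly (map_poly (\<lambda>q. poly q b) P) a1)"
    using assms(1) by (rule poly_diff_dvd)
  have 2: "M dvd (poly (map_poly (\<lambda>q. poly q b) P) a1 - poly (map_poly (\<lambda>q. poly q b1) P) a1)"
  proof (rule poly_coeff_dvd)
    fix i
    have "coeff (map_poly (\<lambda>q. poly q b) P) i = poly (coeff P i) b" by (simp add: coeff_map_poly)
    moreover have "coeff (map_poly (\<lambda>q. poly q b1) P) i = poly (coeff P i) b1" by (simp add: coeff_map_poly)
    ultimately show "M dvd coeff (map_poly (\<lambda>q. poly q b) P) i - coeff (map_poly (\<lambda>q. poly q b1) P) i"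
      using poly_diff_dvd[OF assms(2)] by simp
  qed
  have "eval2 P a b - eval2 P a1 b1 = (poly (map_poly (\<lambda>q. poly q b) P) a - poly (map_poly (\<lambda>q. poly q b) P) a1)
     + (poly (map_poly (\<lambda>q. poly q b) P) a1 - poly (map_poly (\<lambda>q. poly q b1) P) a1)"
    unfolding eval2_def by simp
  then show ?thesis using dvd_add[OF 1 2] by simp
qed

lemma all_pow_dvd_zero:
  fixes p z :: int assumes "prime p" "\<And>n. p ^ n dvd z" shows "z = 0"
proof (rule ccontr)
  assume z: "z \<noteq> 0"
  have "\<not> is_unit p" using assms(1) not_prime_unit by blast
  then have "Suc (multiplicity p z) \<le> multiplicity p z"
    using power_dvd_iff_le_multiplicity[OF z \<open>\<not> is_unit p\<close>, of "Suc (multiplicity p z)"] assms(2)[of "Suc (multiplicity p z)"] by blast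
  then show False by simp
qed

lemma root_dvd:
  fixes p x :: int assumes p: "prime p" and e: "e > 0" and d: "p ^ (e * n) dvd x ^ e"
  shows "p ^ n dvd x"
proof (cases "x = 0")
  case False
  have u: "\<not> is_unit p" using p not_prime_unit by blast
  have "e * n \<le> multiplicity p (x ^ e)"
    using d power_dvd_iff_le_multiplicity[OF _ u] False by simp
  also have "\<dots> = e * multiplicity p x"
    using prime_elem_multiplicity_power_distrib[OF prime_imp_prime_elem[OF p] False] by simp
  finally have "n \<le> multiplicity p x" using e by simp
  then show ?thesis by (rule multiplicity_dvd')
qed simp

lemma mult_split:
  fixes p K1 X1 :: int
  assumes p: "prime p" and K: "K1 \<noteq> 0" and d: "p ^ t dvd K1 ^ r * X1"
  shows "p ^ (t - r * multiplicity p K1) dvd X1"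
proof (cases "X1 = 0")
  case False
  have u: "\<not> is_unit p" using p not_prime_unit by blast
  have "t \<le> multiplicity p (K1 ^ r * X1)"
    using d power_dvd_iff_le_multiplicity[OF _ u] False K by simp
  also have "\<dots> = r * multiplicity p K1 + multiplicity p X1"
    using prime_elem_multiplicity_power_distrib[OF prime_imp_prime_elem[OF p] K, of r]
      prime_elem_multiplicity_mult_distrib[OF prime_imp_prime_elem[OF p], of "K1^r" X1] False K
    by simp
  finally have "t - r * multiplicity p K1 \<le> multiplicity p X1" by simp
  then show ?thesis by (rule multiplicity_dvd')
qed simp


theorem lemma4p6:
  fixes p :: int and k r :: nat and A B K :: "int poly poly" and a1 b1 :: int
  assumes "prime p" and "k > 0" and "r > 0"
    and "homogeneous2 A" and "homogeneous2 B" and "homogeneous2 K"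
    and "is_gcd2 (A ^ 3) (B ^ 2) (K ^ r)"
  defines "R \<equiv> res_form (A ^ 3 div K ^ r) (B ^ 2 div K ^ r)"
  defines "\<nu> \<equiv> max (enat (nat \<lceil>real (12 * k) / real r\<rceil>)) (vp p R)"
  defines "\<U> \<equiv> {(a::int, b::int). p ^ (4 * k) dvd eval2 A a b \<and> p ^ (6 * k) dvd eval2 B a b}"
  assumes "(a1, b1) \<in> \<U>" and "gcd (gcd a1 b1) p = 1"
  shows "{a. in_coset p \<nu> a1 a} \<times> {b. in_coset p \<nu> b1 b} \<subseteq> \<U>"
proof -
  note pr = assms(1)
  have u: "\<not> is_unit p" using pr not_prime_unit by blast
  note g = assms(7)
  have icD: "ic (K ^ r) = 1" by (rule gcd_prim[OF g])
  have "lex_lc2 (K ^ r) > 0" using g unfolding is_gcd2_def by blast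
  then have D0: "K ^ r \<noteq> 0" unfolding lex_lc2_def by (metis coeff_0 less_irrefl)
  define A' where "A' = A ^ 3 div K ^ r"
  define B' where "B' = B ^ 2 div K ^ r"
  have eA: "K ^ r * A' = A ^ 3" using exact_div[OF _ icD D0] g unfolding is_gcd2_def A'_def by blast
  have eB: "K ^ r * B' = B ^ 2" using exact_div[OF _ icD D0] g unfolding is_gcd2_def B'_def by blast
  obtain dA where dA: "hdeg dA A" using homogeneous2_hdeg[OF assms(4)] by blast
  obtain dB where dB: "hdeg dB B" using homogeneous2_hdeg[OF assms(5)] by blast
  obtain dK where dK: "hdeg dK K" using homogeneous2_hdeg[OF assms(6)] by blast
  have hA': "hdeg (tdeg2 A') A'"
    by (rule hdeg_tdeg2'[OF hdeg_quot[OF eA D0 hdeg_power[OF dK] hdeg_power[OF dA]]])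
  have hB': "hdeg (tdeg2 B') B'"
    by (rule hdeg_tdeg2'[OF hdeg_quot[OF eB D0 hdeg_power[OF dK] hdeg_power[OF dB]]])
  have RR: "R = resultant_sub (tdeg2 A') (tdeg2 B') (dehom2 A') (dehom2 B')"
    unfolding R_def res_form_def A'_def B'_def ..
  have evA: "eval2 A x y ^ 3 = eval2 K x y ^ r * eval2 A' x y" for x y
    using arg_cong[OF eA, of "\<lambda>P. eval2 P x y"] by (simp add: eval2_mult eval2_power)
  have evB: "eval2 B x y ^ 2 = eval2 K x y ^ r * eval2 B' x y" for x y
    using arg_cong[OF eB, of "\<lambda>P. eval2 P x y"] by (simp add: eval2_mult eval2_power)
  have A1: "p ^ (4 * k) dvd eval2 A a1 b1" and B1: "p ^ (6 * k) dvd eval2 B a1 b1"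
    using assms(11) unfolding \<U>_def by auto
  have h12A: "p ^ (12 * k) dvd eval2 K a1 b1 ^ r * eval2 A' a1 b1"
  proof -
    have "(p ^ (4 * k)) ^ 3 dvd eval2 A a1 b1 ^ 3" using A1 by (rule dvd_power_same)
    then show ?thesis unfolding evA by (simp add: power_mult[symmetric] mult.commute mult.left_commute)
  qed
  have h12B: "p ^ (12 * k) dvd eval2 K a1 b1 ^ r * eval2 B' a1 b1"
  proof -
    have "(p ^ (6 * k)) ^ 2 dvd eval2 B a1 b1 ^ 2" using B1 by (rule dvd_power_same)
    then show ?thesis unfolding evB by (simp add: power_mult[symmetric] mult.commute mult.left_commute)
  qed
  have cop: "\<not> p dvd a1 \<or> \<not> p dvd b1"
  proof (rule ccontr)
    assume "\<not> (\<not> p dvd a1 \<or> \<not> p dvd b1)"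
    then have "p dvd gcd (gcd a1 b1) p" by simp
    then have "p dvd 1" using assms(12) by simp
    then show False using u by simp
  qed
  show ?thesis
  proof (clarify)
    fix x y assume hx: "in_coset p \<nu> a1 x" and hy: "in_coset p \<nu> b1 y"
    show "(x, y) \<in> \<U>"
    proof (cases "R = 0")
      case True
      then have "\<nu> = \<infinity>" unfolding \<nu>_def vp_def by simp
      then have "\<forall>n. p ^ n dvd x - a1" "\<forall>n. p ^ n dvd y - b1"
        using hx hy unfolding in_coset_def by auto
      then have "x - a1 = 0" "y - b1 = 0" using all_pow_dvd_zero[OF pr] by blast+
      then show ?thesis using assms(11) by simp
    next
      case False
      define c where "c = nat \<lceil>real (12 * k) / real r\<rceil>"
      define N where "N = max c (multiplicity p R)"
      have nu: "\<nu> = enat N" unfolding \<nu>_def vp_def N_def c_def using False by simp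
      have dx: "p ^ N dvd x - a1" using hx unfolding in_coset_def nu by simp
      have dy: "p ^ N dvd y - b1" using hy unfolding in_coset_def nu by simp
      have tr: "p ^ n dvd eval2 P x y" if "n \<le> N" "p ^ n dvd eval2 P a1 b1" for n P
      proof -
        have "p ^ n dvd p ^ N" using that(1) by (rule le_imp_power_dvd)
        then have "p ^ n dvd eval2 P x y - eval2 P a1 b1" using eval2_cong[OF dx dy] dvd_trans by blast
        then have "p ^ n dvd (eval2 P x y - eval2 P a1 b1) + eval2 P a1 b1" using that(2) by (rule dvd_add)
        then show ?thesis by simp
      qed
      have c12: "12 * k \<le> c * r"
      proof -
        have "real (12 * k) / real r \<le> real c" unfolding c_def by linarith
        then have "real (12 * k) \<le> real c * real r" using assms(3) by (simp add: field_simps)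
        then show ?thesis by (simp flip: of_nat_mult)
      qed
      have main: "p ^ (12 * k) dvd eval2 K x y ^ r * eval2 A' x y \<and> p ^ (12 * k) dvd eval2 K x y ^ r * eval2 B' x y"
      proof (cases "p ^ c dvd eval2 K a1 b1")
        case True
        then have "p ^ c dvd eval2 K x y" using tr[of c K] N_def by simp
        then have "(p ^ c) ^ r dvd eval2 K x y ^ r" by (rule dvd_power_same)
        then have "p ^ (c * r) dvd eval2 K x y ^ r" by (simp add: power_mult)
        moreover have "p ^ (12 * k) dvd p ^ (c * r)" using c12 by (rule le_imp_power_dvd)
        ultimately have "p ^ (12 * k) dvd eval2 K x y ^ r" by (rule dvd_trans[rotated])
        then show ?thesis by simp
      next
        case False
        then have K1: "eval2 K a1 b1 \<noteq> 0" by auto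
        define m where "m = multiplicity p (eval2 K a1 b1)"
        have mc: "m < c" using False multiplicity_dvd'[of c p "eval2 K a1 b1"] unfolding m_def by linarith
        have rm: "r * m < 12 * k"
        proof -
          have "int m < \<lceil>real (12 * k) / real r\<rceil>" using mc unfolding c_def by linarith
          then have "real m < real (12 * k) / real r" by (simp add: less_ceiling_iff)
          then have "real m * real r < real (12 * k)" using assms(3) by (simp add: field_simps)
          then show ?thesis by (simp flip: of_nat_mult add: mult.commute)
        qed
        define s where "s = 12 * k - r * m"
        have sA: "p ^ s dvd eval2 A' a1 b1" unfolding s_def m_def by (rule mult_split[OF pr K1 h12A])
        have sB: "p ^ s dvd eval2 B' a1 b1" unfolding s_def m_def by (rule mult_split[OF pr K1 h12B])
        have sxy: "p ^ s dvd eval2 A' x y \<and> p ^ s dvd eval2 B' x y"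
        proof (cases "tdeg2 A' + tdeg2 B' > 0")
          case True
          note rd = res_dvd[OF hA' hB' True sA sB, folded RR]
          have "p ^ s dvd R"
          proof (cases "p dvd a1")
            case False
            then have "coprime p a1" using pr by (simp add: prime_imp_coprime)
            then have "coprime (p ^ s) (a1 ^ (tdeg2 A' + tdeg2 B' - 1))" by simp
            then show ?thesis using rd(1) by (simp add: coprime_dvd_mult_left_iff)
          next
            case True
            then have "\<not> p dvd b1" using cop by simp
            then have "coprime p b1" using pr by (simp add: prime_imp_coprime)
            then have "coprime (p ^ s) (b1 ^ (tdeg2 A' + tdeg2 B' - 1))" by simp
            then show ?thesis using rd(2) by (simp add: coprime_dvd_mult_left_iff)
          qed
          then have "s \<le> multiplicity p R" using power_dvd_iff_le_multiplicity[OF \<open>R \<noteq> 0\<close> u] by simp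
          then have "s \<le> N" unfolding N_def by simp
          then show ?thesis using tr sA sB by blast
        next
          case False
          then have "tdeg2 A' = 0" "tdeg2 B' = 0" by auto
          then have "eval2 A' x y = eval2 A' a1 b1" "eval2 B' x y = eval2 B' a1 b1"
            using eval2_hdeg[OF hA'] eval2_hdeg[OF hB'] by simp_all
          then show ?thesis using sA sB by simp
        qed
        have "p ^ m dvd eval2 K a1 b1" unfolding m_def by (rule multiplicity_dvd)
        then have "p ^ m dvd eval2 K x y" using tr[of m K] mc N_def by simp
        then have "(p ^ m) ^ r dvd eval2 K x y ^ r" by (rule dvd_power_same)
        then have pm: "p ^ (r * m) dvd eval2 K x y ^ r" by (simp add: power_mult mult.commute)
        have e12: "p ^ (12 * k) = p ^ (r * m) * p ^ s" unfolding s_def using rm by (simp flip: power_add)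
        show ?thesis unfolding e12 using pm sxy by (simp add: mult_dvd_mono)
      qed
      have "p ^ (3 * (4 * k)) dvd eval2 A x y ^ 3" unfolding evA using main by simp
      then have "p ^ (4 * k) dvd eval2 A x y" by (rule root_dvd[OF pr, rotated]) simp
      moreover have "p ^ (2 * (6 * k)) dvd eval2 B x y ^ 2" unfolding evB using main by simp
      then have "p ^ (6 * k) dvd eval2 B x y" by (rule root_dvd[OF pr, rotated]) simp
      ultimately show ?thesis unfolding \<U>_def by simp
    qed
  qed
qed

end
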